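(* Let $N,M,k$ be positive integers, and for $x\in\mathbb{Z}_N^k$, $w\in\mathbb{Z}_N$ let $\eta^x_w:=|\{b\in\{0,\ldots,M-1\}^k : b\cdot x\equiv w \pmod N\}|$. Define $$P:=\frac{1}{M^kN^{k+1}}\sum_{x\in\mathbb{Z}_N^k}\Big(\sum_{w\in\mathbb{Z}_N}\sqrt{\eta^x_w}\Big)^2 .$$ Suppose $\alpha,\beta>0$ are such that $\Pr(\eta^x_w\ge\alpha)\ge\beta$ when $x\in\mathbb{Z}_N^k$ and $w\in\mathbb{Z}_N$ are chosen independently and uniformly at random. Then $\alpha\beta^2N/M^k\le P\le M^k/N$.
   Context: $P$ is the success probability of the pretty good measurement for identifying the hidden shift from $k$ copies of the generalized hidden shift states. $b\cdot x=\sum_{i=1}^k b_ix_i$. *)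

theory Defs
  imports "HOL-Analysis.Analysis" "HOL-Library.FuncSet"
begin

definition ZNk :: "nat \<Rightarrow> nat \<Rightarrow> (nat \<Rightarrow> nat) set" where
  "ZNk N k = ({0..<k} \<rightarrow>\<^sub>E {0..<N})"

definition dotp :: "nat \<Rightarrow> (nat \<Rightarrow> nat) \<Rightarrow> (nat \<Rightarrow> nat) \<Rightarrow> nat" where
  "dotp k b x = (\<Sum>i<k. b i * x i)"

definition eta :: "nat \<Rightarrow> nat \<Rightarrow> nat \<Rightarrow> (nat \<Rightarrow> nat) \<Rightarrow> nat \<Rightarrow> nat" where
  "eta N M k x w = card {b \<in> ZNk M k. dotp k b x mod N = w mod N}"

definition succP :: "nat \<Rightarrow> nat \<Rightarrow> nat \<Rightarrow> real" where
  "succP N M k = (1 / (real M ^ k * real N ^ (k + 1))) *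
     (\<Sum>x\<in>ZNk N k. (\<Sum>w\<in>{0..<N}. sqrt (real (eta N M k x w)))\<^sup>2)"

definition probEta :: "nat \<Rightarrow> nat \<Rightarrow> nat \<Rightarrow> real \<Rightarrow> real" where
  "probEta N M k \<alpha> = real (card {(x, w). x \<in> ZNk N k \<and> w \<in> {0..<N} \<and> real (eta N M k x w) \<ge> \<alpha>})
      / (real N ^ k * real N)"

end

theory Submission
  imports Defs
begin

lemma card_ZNk: "card (ZNk N k) = N ^ k"
  unfolding ZNk_def by (simp add: card_PiE)

lemma fin_ZNk: "finite (ZNk N k)"
  unfolding ZNk_def by (simp add: finite_PiE)

lemma sum_eta:
  assumes "N > 0"
  shows "(\<Sum>w\<in>{0..<N}. eta N M k x w) = M ^ k"
proof -
  have "(\<Sum>w\<in>{0..<N}. eta N M k x w) = (\<Sum>w\<in>{0..<N}. \<Sum>b\<in>{b \<in> ZNk M k. dotp k b x mod N = w}. (1::nat))"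
    by (rule sum.cong) (auto simp: eta_def)
  also have "\<dots> = (\<Sum>b\<in>ZNk M k. (1::nat))"
    by (rule sum.group) (use assms in \<open>auto simp: fin_ZNk\<close>)
  also have "\<dots> = M ^ k" by (simp add: card_ZNk)
  finally show ?thesis .
qed

lemma sqrt_le_nat: "sqrt (real n) \<le> real n"
proof (cases "n = 0")
  case False
  then have "real n \<le> real n ^ 2" by (simp add: power2_eq_square)
  then show ?thesis by (simp add: real_sqrt_le_iff' power2_eq_square)
qed simp

theorem lemma1:
  fixes N M k :: nat and \<alpha> \<beta> :: real
  assumes "N > 0" "M > 0" "k > 0" "\<alpha> > 0" "\<beta> > 0"
    and "probEta N M k \<alpha> \<ge> \<beta>"
  shows "\<alpha> * \<beta>\<^sup>2 * real N / real M ^ k \<le> succP N M k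
       \<and> succP N M k \<le> real M ^ k / real N"
proof
  define F where "F x = (\<Sum>w\<in>{0..<N}. sqrt (real (eta N M k x w)))" for x
  have P: "succP N M k = (1 / (real M ^ k * real N ^ (k + 1))) * (\<Sum>x\<in>ZNk N k. (F x)\<^sup>2)"
    by (simp add: succP_def F_def)
  have Fnn: "F x \<ge> 0" for x unfolding F_def by (intro sum_nonneg) auto
  have pos: "real M ^ k * real N ^ (k + 1) > 0" using assms by simp
  show "succP N M k \<le> real M ^ k / real N"
  proof -
    have "F x \<le> real M ^ k" for x
    proof -
      have "F x \<le> (\<Sum>w\<in>{0..<N}. real (eta N M k x w))"
        unfolding F_def by (intro sum_mono sqrt_le_nat)
      also have "\<dots> = real M ^ k" using sum_eta[OF assms(1), of M k x]
        by (metis of_nat_power of_nat_sum)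
      finally show ?thesis .
    qed
    then have "(F x)\<^sup>2 \<le> (real M ^ k)\<^sup>2" for x using Fnn by (intro power_mono) auto
    then have "(\<Sum>x\<in>ZNk N k. (F x)\<^sup>2) \<le> real N ^ k * (real M ^ k)\<^sup>2"
      using sum_mono[of "ZNk N k" "\<lambda>x. (F x)\<^sup>2" "\<lambda>_. (real M ^ k)\<^sup>2"]
      by (simp add: card_ZNk)
    then have "succP N M k \<le> (1 / (real M ^ k * real N ^ (k + 1))) * (real N ^ k * (real M ^ k)\<^sup>2)"
      unfolding P using pos by (intro mult_left_mono) auto
    also have "\<dots> = real M ^ k / real N" using assms
      by (simp add: field_simps power2_eq_square)
    finally show ?thesis .
  qed
  show "\<alpha> * \<beta>\<^sup>2 * real N / real M ^ k \<le> succP N M k"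
  proof -
    define W where "W x = {w\<in>{0..<N}. \<alpha> \<le> real (eta N M k x w)}" for x
    define s where "s x = real (card (W x))" for x
    have S: "{(x, w). x \<in> ZNk N k \<and> w \<in> {0..<N} \<and> real (eta N M k x w) \<ge> \<alpha>} = Sigma (ZNk N k) W"
      by (auto simp: W_def)
    have cS: "real (card (Sigma (ZNk N k) W)) = (\<Sum>x\<in>ZNk N k. s x)"
      by (subst card_SigmaI) (auto simp: fin_ZNk W_def s_def)
    have "\<beta> \<le> (\<Sum>x\<in>ZNk N k. s x) / (real N ^ k * real N)"
      using assms(6) unfolding probEta_def S cS .
    then have b1: "\<beta> * real N ^ (k+1) \<le> (\<Sum>x\<in>ZNk N k. s x)"
      using assms(1) by (simp add: field_simps)
    have CS: "(\<Sum>x\<in>ZNk N k. 1 * s x)\<^sup>2 \<le> (\<Sum>x\<in>ZNk N k. 1\<^sup>2) * (\<Sum>x\<in>ZNk N k. (s x)\<^sup>2)"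
      by (rule Cauchy_Schwarz_ineq_sum)
    have "(\<beta> * real N ^ (k+1))\<^sup>2 \<le> (\<Sum>x\<in>ZNk N k. s x)\<^sup>2"
      using b1 assms by (intro power_mono) auto
    also have "\<dots> \<le> real N ^ k * (\<Sum>x\<in>ZNk N k. (s x)\<^sup>2)"
      using CS by (simp add: card_ZNk)
    finally have b2: "(\<beta> * real N ^ (k+1))\<^sup>2 \<le> real N ^ k * (\<Sum>x\<in>ZNk N k. (s x)\<^sup>2)" .
    have "\<alpha> * (s x)\<^sup>2 \<le> (F x)\<^sup>2" for x
    proof -
      have "s x * sqrt \<alpha> = (\<Sum>w\<in>W x. sqrt \<alpha>)" by (simp add: s_def)
      also have "\<dots> \<le> (\<Sum>w\<in>W x. sqrt (real (eta N M k x w)))"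
        by (intro sum_mono) (auto simp: W_def)
      also have "\<dots> \<le> F x" unfolding F_def
        by (intro sum_mono2) (auto simp: W_def)
      finally have "s x * sqrt \<alpha> \<le> F x" .
      then have "(s x * sqrt \<alpha>)\<^sup>2 \<le> (F x)\<^sup>2"
        using assms(4) by (intro power_mono) (auto simp: s_def)
      then show ?thesis using assms(4) by (simp add: power_mult_distrib mult.commute)
    qed
    then have b3: "\<alpha> * (\<Sum>x\<in>ZNk N k. (s x)\<^sup>2) \<le> (\<Sum>x\<in>ZNk N k. (F x)\<^sup>2)"
      by (simp add: sum_distrib_left sum_mono)
    have "\<beta>\<^sup>2 * real N ^ (k+2) \<le> (\<Sum>x\<in>ZNk N k. (s x)\<^sup>2)"
    proof -
      have "real N ^ k * (\<beta>\<^sup>2 * real N ^ (k+2)) = (\<beta> * real N ^ (k+1))\<^sup>2"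
        by (simp add: power_mult_distrib power_add power2_eq_square field_simps)
      then show ?thesis using b2 assms(1)
        by (metis mult_le_cancel_left_pos of_nat_0_less_iff zero_less_power)
    qed
    then have b4: "\<alpha> * (\<beta>\<^sup>2 * real N ^ (k+2)) \<le> (\<Sum>x\<in>ZNk N k. (F x)\<^sup>2)"
      using b3 assms(4) by (meson mult_left_mono less_imp_le order_trans)
    have "\<alpha> * \<beta>\<^sup>2 * real N / real M ^ k = (1 / (real M ^ k * real N ^ (k + 1))) * (\<alpha> * (\<beta>\<^sup>2 * real N ^ (k+2)))"
      using assms by (simp add: field_simps power_add)
    also have "\<dots> \<le> succP N M k" unfolding P using b4 pos by (intro mult_left_mono) auto
    finally show ?thesis .
  qed
qed

end
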